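(* Let $G$ be a graph with $n$ vertices and $m$ edges. Then $G$ is graceful if and only if $n\leqslant m+1$ and the vertices of $\widehat{G}$ can be arranged (ordered) in such a way that the adjacency matrix of $\widehat{G}$ becomes graceful.
   Context: Graphs are finite, simple and undirected. A graph $G=(V,E)$ with $m$ edges is graceful if there is an injective map $f:V\to\{0,1,\ldots,m\}$ such that the edge labels $|f(u)-f(v)|$, $uv\in E$, are pairwise distinct (such $f$ is a graceful labeling or $\beta$-labeling). If $G$ has $n\le m+1$ vertices, $\widehat{G}$ denotes the graph obtained from $G$ by adding $m+1-n$ isolated vertices. For a $p\times q$ matrix with rows indexed $1,\ldots,p$ and columns $1,\ldots,q$, the box-value of position $(i,j)$ is $p+j-i$, and for each $c=1,\ldots,p+q-1$ the set of positions with box-value $c$ is called a diagonal. A $0$-$1$ matrix is graceful if every diagonal contains at most one entry equal to $1$. *)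

theory Defs
  imports Main
begin

definition simple_graph :: "'a set \<Rightarrow> 'a set set \<Rightarrow> bool" where
  "simple_graph V E \<longleftrightarrow> finite V \<and>
     (\<forall>e\<in>E. \<exists>u v. u \<in> V \<and> v \<in> V \<and> u \<noteq> v \<and> e = {u, v})"

definition graceful_labeling :: "'a set \<Rightarrow> 'a set set \<Rightarrow> ('a \<Rightarrow> nat) \<Rightarrow> bool" where
  "graceful_labeling V E f \<longleftrightarrow> inj_on f V \<and> f ` V \<subseteq> {0..card E} \<and>
     (\<forall>u v u' v'. {u, v} \<in> E \<longrightarrow> {u', v'} \<in> E \<longrightarrow>
        \<bar>int (f u) - int (f v)\<bar> = \<bar>int (f u') - int (f v')\<bar> \<longrightarrow> {u, v} = {u', v'})"

definition graceful :: "'a set \<Rightarrow> 'a set set \<Rightarrow> bool" where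
  "graceful V E \<longleftrightarrow> (\<exists>f. graceful_labeling V E f)"

definition hat_vertices :: "'a set \<Rightarrow> 'a set set \<Rightarrow> ('a + nat) set" where
  "hat_vertices V E = Inl ` V \<union> Inr ` {..< card E + 1 - card V}"

definition hat_edges :: "'a set set \<Rightarrow> ('a + nat) set set" where
  "hat_edges E = (\<lambda>e. Inl ` e) ` E"

text \<open>Adjacency matrix w.r.t. the ordering sigma : {1..N} -> vertices (rows/columns 1..N).\<close>
definition adj_matrix :: "'b set set \<Rightarrow> (nat \<Rightarrow> 'b) \<Rightarrow> nat \<Rightarrow> nat \<Rightarrow> nat" where
  "adj_matrix E \<sigma> i j = (if {\<sigma> i, \<sigma> j} \<in> E then 1 else 0)"

text \<open>A p x q 0-1 matrix (positions 1..p, 1..q) is graceful if every diagonal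
  (positions of equal box-value p+j-i) contains at most one entry equal to 1.\<close>
definition box_value :: "nat \<Rightarrow> nat \<Rightarrow> nat \<Rightarrow> nat" where
  "box_value p i j = p + j - i"

definition graceful_matrix :: "nat \<Rightarrow> nat \<Rightarrow> (nat \<Rightarrow> nat \<Rightarrow> nat) \<Rightarrow> bool" where
  "graceful_matrix p q M \<longleftrightarrow>
     (\<forall>i j. 1 \<le> i \<and> i \<le> p \<and> 1 \<le> j \<and> j \<le> q \<longrightarrow> M i j \<in> {0, 1}) \<and>
     (\<forall>i j i' j'. 1 \<le> i \<and> i \<le> p \<and> 1 \<le> j \<and> j \<le> q \<and>
                  1 \<le> i' \<and> i' \<le> p \<and> 1 \<le> j' \<and> j' \<le> q \<and>
                  M i j = 1 \<and> M i' j' = 1 \<and> box_value p i j = box_value p i' j'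
                  \<longrightarrow> i = i' \<and> j = j')"

end

theory Submission
  imports Defs
begin

lemma edge_info:
  assumes "simple_graph V E" "{u, v} \<in> E"
  shows "u \<in> V \<and> v \<in> V \<and> u \<noteq> v"
proof -
  obtain a b where "a \<in> V" "b \<in> V" "a \<noteq> b" "{u, v} = {a, b}"
    using assms unfolding simple_graph_def by blast
  then show ?thesis by (auto simp: doubleton_eq_iff)
qed

lemma adj_one:
  assumes "{u, v} \<in> E" "\<sigma> i = Inl u" "\<sigma> j = Inl v"
  shows "adj_matrix (hat_edges E) \<sigma> i j = 1"
proof -
  have "{\<sigma> i, \<sigma> j} = Inl ` {u, v}" using assms by auto
  moreover have "Inl ` {u, v} \<in> (\<lambda>e. Inl ` e) ` E" using assms(1) by (rule imageI)
  ultimately show ?thesis unfolding adj_matrix_def hat_edges_def by simp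
qed

lemma dir_back:
  assumes G: "simple_graph V E"
    and bij: "bij_betw \<sigma> {1..card E + 1} (hat_vertices V E)"
    and gm: "graceful_matrix (card E + 1) (card E + 1) (adj_matrix (hat_edges E) \<sigma>)"
  shows "graceful V E"
proof -
  define N where "N = card E + 1"
  define \<rho> where "\<rho> = the_inv_into {1..N} \<sigma>"
  have rb: "bij_betw \<rho> (hat_vertices V E) {1..N}"
    unfolding \<rho>_def N_def using bij by (simp add: bij_betw_the_inv_into)
  have sr: "\<And>x. x \<in> hat_vertices V E \<Longrightarrow> \<sigma> (\<rho> x) = x"
    unfolding \<rho>_def N_def using bij by (meson f_the_inv_into_f_bij_betw)
  have hv: "\<And>v. v \<in> V \<Longrightarrow> Inl v \<in> hat_vertices V E" unfolding hat_vertices_def by auto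
  have rr: "\<And>v. v \<in> V \<Longrightarrow> \<rho> (Inl v) \<in> {1..N}" using rb hv bij_betwE by blast
  define f where "f v = \<rho> (Inl v) - 1" for v
  have "graceful_labeling V E f"
    unfolding graceful_labeling_def
  proof (intro conjI allI impI)
    show "inj_on f V"
    proof (rule inj_onI)
      fix x y assume xy: "x \<in> V" "y \<in> V" "f x = f y"
      then have "\<rho> (Inl x) = \<rho> (Inl y)" using rr[of x] rr[of y] unfolding f_def by auto
      then have "Inl x = (Inl y :: 'a + nat)" using sr[OF hv[OF xy(1)]] sr[OF hv[OF xy(2)]] by metis
      then show "x = y" by simp
    qed
    show "f ` V \<subseteq> {0..card E}"
    proof
      fix x assume "x \<in> f ` V"
      then obtain v where "v \<in> V" "x = f v" by blast
      then show "x \<in> {0..card E}" using rr[of v] unfolding f_def N_def by auto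
    qed
  next
    fix u v u' v'
    assume e1: "{u, v} \<in> E" and e2: "{u', v'} \<in> E"
      and eq: "\<bar>int (f u) - int (f v)\<bar> = \<bar>int (f u') - int (f v')\<bar>"
    have V1: "u \<in> V" "v \<in> V" "u \<noteq> v" using edge_info[OF G e1] by auto
    have V2: "u' \<in> V" "v' \<in> V" "u' \<noteq> v'" using edge_info[OF G e2] by auto
    define i where "i = \<rho> (Inl u)"
    define j where "j = \<rho> (Inl v)"
    define i' where "i' = \<rho> (Inl u')"
    define j' where "j' = \<rho> (Inl v')"
    have rng: "i \<in> {1..N}" "j \<in> {1..N}" "i' \<in> {1..N}" "j' \<in> {1..N}"
      using rr V1 V2 unfolding i_def j_def i'_def j'_def by auto
    have s: "\<sigma> i = Inl u" "\<sigma> j = Inl v" "\<sigma> i' = Inl u'" "\<sigma> j' = Inl v'"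
      using sr hv V1 V2 unfolding i_def j_def i'_def j'_def by auto
    have M: "adj_matrix (hat_edges E) \<sigma> i j = 1" "adj_matrix (hat_edges E) \<sigma> j i = 1"
      "adj_matrix (hat_edges E) \<sigma> i' j' = 1" "adj_matrix (hat_edges E) \<sigma> j' i' = 1"
    proof -
      have e1': "{v, u} \<in> E" using e1 by (simp only: insert_commute[of v u])
      have e2': "{v', u'} \<in> E" using e2 by (simp only: insert_commute[of v' u'])
      show "adj_matrix (hat_edges E) \<sigma> i j = 1" by (rule adj_one[OF e1 s(1,2)])
      show "adj_matrix (hat_edges E) \<sigma> j i = 1" by (rule adj_one[OF e1' s(2,1)])
      show "adj_matrix (hat_edges E) \<sigma> i' j' = 1" by (rule adj_one[OF e2 s(3,4)])
      show "adj_matrix (hat_edges E) \<sigma> j' i' = 1" by (rule adj_one[OF e2' s(4,3)])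
    qed
    have eq2: "\<bar>int i - int j\<bar> = \<bar>int i' - int j'\<bar>"
      using eq rng unfolding f_def i_def[symmetric] j_def[symmetric] i'_def[symmetric] j'_def[symmetric]
      by auto
    have D: "\<And>a b a' b'. a \<in> {1..N} \<Longrightarrow> b \<in> {1..N} \<Longrightarrow> a' \<in> {1..N} \<Longrightarrow> b' \<in> {1..N} \<Longrightarrow>
       adj_matrix (hat_edges E) \<sigma> a b = 1 \<Longrightarrow> adj_matrix (hat_edges E) \<sigma> a' b' = 1 \<Longrightarrow>
       int b - int a = int b' - int a' \<Longrightarrow> a = a' \<and> b = b'"
    proof -
      fix a b a' b' assume r: "a \<in> {1..N}" "b \<in> {1..N}" "a' \<in> {1..N}" "b' \<in> {1..N}"
        and m: "adj_matrix (hat_edges E) \<sigma> a b = 1" "adj_matrix (hat_edges E) \<sigma> a' b' = 1"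
        and d: "int b - int a = int b' - int a'"
      have bx: "box_value N a b = box_value N a' b'" using r d unfolding box_value_def by auto
      have H: "\<forall>i j i' j'. 1 \<le> i \<and> i \<le> N \<and> 1 \<le> j \<and> j \<le> N \<and>
                  1 \<le> i' \<and> i' \<le> N \<and> 1 \<le> j' \<and> j' \<le> N \<and>
                  adj_matrix (hat_edges E) \<sigma> i j = 1 \<and> adj_matrix (hat_edges E) \<sigma> i' j' = 1 \<and> box_value N i j = box_value N i' j'
                  \<longrightarrow> i = i' \<and> j = j'" using conjunct2[OF gm[unfolded graceful_matrix_def]] unfolding N_def .
      show "a = a' \<and> b = b'"
        apply (rule H[rule_format])
        using r m bx by (intro conjI; simp)
    qed
    show "{u, v} = {u', v'}"
    proof (cases "int j - int i = int j' - int i'")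
      case True
      then have "i = i' \<and> j = j'" using D[OF rng M(1) M(3)] by auto
      then show ?thesis using s by auto
    next
      case False
      then have "int j - int i = int i' - int j'" using eq2 by auto
      then have "i = j' \<and> j = i'" using D[OF rng(1,2,4,3) M(1) M(4)] by auto
      then show ?thesis using s by auto
    qed
  qed
  then show ?thesis unfolding graceful_def by blast
qed


lemma adj_get:
  assumes "adj_matrix (hat_edges E) \<sigma> i j = 1" "simple_graph V E"
  shows "\<exists>u v. {u, v} \<in> E \<and> \<sigma> i = Inl u \<and> \<sigma> j = Inl v"
proof -
  have "{\<sigma> i, \<sigma> j} \<in> hat_edges E" using assms(1) unfolding adj_matrix_def by (auto split: if_splits)
  then obtain e where e: "e \<in> E" "{\<sigma> i, \<sigma> j} = Inl ` e" unfolding hat_edges_def by blast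
  obtain a b where ab: "e = {a, b}" using e(1) assms(2) unfolding simple_graph_def by blast
  have "{\<sigma> i, \<sigma> j} = {Inl a, Inl b}" using e(2) ab by simp
  then have "(\<sigma> i = Inl a \<and> \<sigma> j = Inl b) \<or> (\<sigma> i = Inl b \<and> \<sigma> j = Inl a)"
    by (simp add: doubleton_eq_iff)
  moreover have "{b, a} \<in> E" using e(1) ab by (simp only: insert_commute[of b a])
  ultimately show ?thesis using e(1) ab by blast
qed

lemma dir_fwd:
  assumes G: "simple_graph V E" and gl: "graceful_labeling V E f"
  shows "card V \<le> card E + 1 \<and>
           (\<exists>\<sigma>. bij_betw \<sigma> {1..card E + 1} (hat_vertices V E) \<and>
                 graceful_matrix (card E + 1) (card E + 1) (adj_matrix (hat_edges E) \<sigma>))"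
proof -
  define m where "m = card E"
  have finV: "finite V" using G unfolding simple_graph_def by blast
  have inj: "inj_on f V" and rng: "f ` V \<subseteq> {0..m}" using gl unfolding graceful_labeling_def m_def by auto
  have cV: "card V \<le> m + 1" using card_inj_on_le[OF inj rng] by simp
  define U where "U = {0..m} - f ` V"
  define K where "K = {..< m + 1 - card V}"
  have cU: "card U = m + 1 - card V" unfolding U_def
    using card_Diff_subset[OF finite_imageI[OF finV] rng] card_image[OF inj] by simp
  obtain h where h: "bij_betw h K U"
    using finite_same_card_bij[of K U] cU unfolding K_def U_def by auto
  define g where "g x = (case x of Inl v \<Rightarrow> f v | Inr k \<Rightarrow> h k)" for x
  have b1: "bij_betw g (Inl ` V) (f ` V)"
    unfolding bij_betw_def
  proof
    show "inj_on g (Inl ` V)" using inj unfolding g_def inj_on_def by auto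
    show "g ` Inl ` V = f ` V" unfolding g_def by (simp add: image_image)
  qed
  have b2: "bij_betw g (Inr ` K) U"
    unfolding bij_betw_def
  proof
    show "inj_on g (Inr ` K)" using h unfolding g_def inj_on_def bij_betw_def by auto
    show "g ` Inr ` K = U" using h unfolding g_def bij_betw_def by (simp add: image_image)
  qed
  have hv: "hat_vertices V E = Inl ` V \<union> Inr ` K" unfolding hat_vertices_def K_def m_def by simp
  have un: "f ` V \<union> U = {0..m}" using rng unfolding U_def by blast
  have bg: "bij_betw g (hat_vertices V E) {0..m}"
    unfolding hv un[symmetric] by (rule bij_betw_combine[OF b1 b2]) (auto simp: U_def)
  define \<tau> where "\<tau> x = g x + 1" for x
  have bs: "bij_betw (\<lambda>x::nat. x + 1) {0..m} {1..m+1}"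
    unfolding bij_betw_def by (auto simp: inj_on_def image_iff intro!: bexI[of _ "_ - 1"])
  have bt: "bij_betw \<tau> (hat_vertices V E) {1..m+1}"
    using bij_betw_trans[OF bg bs] unfolding \<tau>_def comp_def .
  define \<sigma> where "\<sigma> = the_inv_into (hat_vertices V E) \<tau>"
  have bsig: "bij_betw \<sigma> {1..m+1} (hat_vertices V E)"
    unfolding \<sigma>_def using bt by (simp add: bij_betw_the_inv_into)
  have ts: "\<And>i. i \<in> {1..m+1} \<Longrightarrow> \<tau> (\<sigma> i) = i"
    unfolding \<sigma>_def using bt by (meson f_the_inv_into_f_bij_betw)
  have key: "\<And>i j. 1 \<le> i \<Longrightarrow> i \<le> m+1 \<Longrightarrow> 1 \<le> j \<Longrightarrow> j \<le> m+1 \<Longrightarrow>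
      adj_matrix (hat_edges E) \<sigma> i j = 1 \<Longrightarrow>
      \<exists>u v. {u, v} \<in> E \<and> i = f u + 1 \<and> j = f v + 1"
  proof -
    fix i j assume r: "1 \<le> i" "i \<le> m+1" "1 \<le> j" "j \<le> m+1"
      and a: "adj_matrix (hat_edges E) \<sigma> i j = 1"
    obtain u v where uv: "{u, v} \<in> E" "\<sigma> i = Inl u" "\<sigma> j = Inl v" using adj_get[OF a G] by blast
    have "i = f u + 1" using ts[of i] r uv unfolding \<tau>_def g_def by simp
    moreover have "j = f v + 1" using ts[of j] r uv unfolding \<tau>_def g_def by simp
    ultimately show "\<exists>u v. {u, v} \<in> E \<and> i = f u + 1 \<and> j = f v + 1" using uv by blast
  qed
  have "graceful_matrix (m + 1) (m + 1) (adj_matrix (hat_edges E) \<sigma>)"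
    unfolding graceful_matrix_def
  proof (rule conjI; intro allI impI)
    fix i j show "adj_matrix (hat_edges E) \<sigma> i j \<in> {0, 1}" unfolding adj_matrix_def by simp
  next
    fix i j i' j'
    assume A: "1 \<le> i \<and> i \<le> m + 1 \<and> 1 \<le> j \<and> j \<le> m + 1 \<and>
       1 \<le> i' \<and> i' \<le> m + 1 \<and> 1 \<le> j' \<and> j' \<le> m + 1 \<and>
       adj_matrix (hat_edges E) \<sigma> i j = 1 \<and> adj_matrix (hat_edges E) \<sigma> i' j' = 1 \<and>
       box_value (m + 1) i j = box_value (m + 1) i' j'"
    obtain u v where uv: "{u, v} \<in> E" "i = f u + 1" "j = f v + 1" using key A by blast
    obtain u' v' where uv': "{u', v'} \<in> E" "i' = f u' + 1" "j' = f v' + 1" using key A by blast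
    have d: "int (f v) - int (f u) = int (f v') - int (f u')"
      using A uv uv' unfolding box_value_def by auto
    have "\<bar>int (f u) - int (f v)\<bar> = \<bar>int (f u') - int (f v')\<bar>" using d by linarith
    then have eqs: "{u, v} = {u', v'}" using gl uv(1) uv'(1) unfolding graceful_labeling_def by blast
    have V1: "u \<in> V" "v \<in> V" "u \<noteq> v" using edge_info[OF G uv(1)] by auto
    have "f u \<noteq> f v" using inj V1 unfolding inj_on_def by blast
    show "i = i' \<and> j = j'"
    proof (cases "u = u' \<and> v = v'")
      case True then show ?thesis using uv uv' by simp
    next
      case False
      then have "u = v' \<and> v = u'" using eqs by (auto simp: doubleton_eq_iff)
      then have "int (f v) - int (f u) = int (f u) - int (f v)" using d by simp
      then show ?thesis using \<open>f u \<noteq> f v\<close> by simp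
    qed
  qed
  then show ?thesis using cV bsig unfolding m_def by blast
qed

theorem theorem2p3:
  fixes V :: "'a set" and E :: "'a set set"
  assumes "simple_graph V E"
  shows "graceful V E \<longleftrightarrow>
           card V \<le> card E + 1 \<and>
           (\<exists>\<sigma>. bij_betw \<sigma> {1..card E + 1} (hat_vertices V E) \<and>
                 graceful_matrix (card E + 1) (card E + 1) (adj_matrix (hat_edges E) \<sigma>))"
  using dir_fwd[OF assms] dir_back[OF assms] unfolding graceful_def by blast

end
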